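(* Let $a_1,\ldots,a_k\in\mathbb R^d$ and $b_1,\ldots,b_k\in\mathbb R^d$ be two sets of orthonormal vectors such that $\langle a_i,b_i\rangle^2\ge 1-\epsilon$ for each $i\in[k]$. Then $\left\|\sum_{i=1}^k a_i^{\otimes 4}-b_i^{\otimes 4}\right\|_2\le 4\sqrt\epsilon$.
   Context: The 4-tensor $\sum_i a_i^{\otimes4}-b_i^{\otimes4}$ is viewed as the $d^2\times d^2$ matrix $\sum_i (a_i^{\otimes 2})(a_i^{\otimes2})^\top-(b_i^{\otimes2})(b_i^{\otimes2})^\top$, and $\|\cdot\|_2$ is its spectral norm. *)

theory Defs
  imports "HOL-Analysis.Analysis"
begin

definition tensor_sq :: "real^'d \<Rightarrow> real^('d \<times> 'd)" where
  "tensor_sq v = (\<chi> pq. v $ fst pq * v $ snd pq)"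

text \<open>The 4-tensor sum a_i^4 - b_i^4 viewed as the d^2 x d^2 matrix
  sum_i (a_i^2)(a_i^2)^T - (b_i^2)(b_i^2)^T.\<close>
definition quartic_diff_matrix ::
  "nat \<Rightarrow> (nat \<Rightarrow> real^'d) \<Rightarrow> (nat \<Rightarrow> real^'d) \<Rightarrow> real^('d \<times> 'd)^('d \<times> 'd)" where
  "quartic_diff_matrix k a b = (\<chi> r c. \<Sum>i<k.
      (tensor_sq (a i)) $ r * (tensor_sq (a i)) $ c
    - (tensor_sq (b i)) $ r * (tensor_sq (b i)) $ c)"

definition spectral_norm :: "real^'n^'m \<Rightarrow> real" where
  "spectral_norm M = onorm (\<lambda>x. M *v x)"

end

theory Submission
  imports Defs
begin

lemma on_sum:
  fixes E :: "nat \<Rightarrow> 'a::real_inner"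
  assumes orth: "\<forall>i<k. \<forall>j<k. E i \<bullet> E j = (if i = j then 1 else 0)" and j: "j < k"
  shows "E j \<bullet> (\<Sum>i<k. \<beta> i *\<^sub>R E i) = \<beta> j"
proof -
  have "E j \<bullet> (\<Sum>i<k. \<beta> i *\<^sub>R E i) = (\<Sum>i<k. \<beta> i * (if j = i then 1 else 0))"
    by (simp add: inner_sum_right orth j)
  also have "\<dots> = \<beta> j" using j by (simp add: if_distrib sum.delta cong: if_cong)
  finally show ?thesis .
qed

lemma norm_sum_on:
  fixes E :: "nat \<Rightarrow> 'a::real_inner"
  assumes orth: "\<forall>i<k. \<forall>j<k. E i \<bullet> E j = (if i = j then 1 else 0)"
  shows "(norm (\<Sum>i<k. \<beta> i *\<^sub>R E i))\<^sup>2 = (\<Sum>i<k. (\<beta> i)\<^sup>2)"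
proof -
  have "(norm (\<Sum>i<k. \<beta> i *\<^sub>R E i))\<^sup>2 = (\<Sum>j<k. \<beta> j * (E j \<bullet> (\<Sum>i<k. \<beta> i *\<^sub>R E i)))"
    by (simp add: power2_norm_eq_inner inner_sum_left)
  also have "\<dots> = (\<Sum>j<k. (\<beta> j)\<^sup>2)"
    by (rule sum.cong) (auto simp: on_sum[OF orth] power2_eq_square)
  finally show ?thesis .
qed

lemma bessel:
  fixes E :: "nat \<Rightarrow> 'a::real_inner"
  assumes orth: "\<forall>i<k. \<forall>j<k. E i \<bullet> E j = (if i = j then 1 else 0)"
  shows "(\<Sum>i<k. (E i \<bullet> z)\<^sup>2) \<le> (norm z)\<^sup>2"
proof -
  define p where "p = (\<Sum>i<k. (E i \<bullet> z) *\<^sub>R E i)"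
  have zp: "z \<bullet> p = (\<Sum>i<k. (E i \<bullet> z)\<^sup>2)"
    by (simp add: p_def inner_sum_right power2_eq_square inner_commute)
  have pp: "p \<bullet> p = (\<Sum>i<k. (E i \<bullet> z)\<^sup>2)"
    using norm_sum_on[OF orth, of "\<lambda>i. E i \<bullet> z"] by (simp add: p_def power2_norm_eq_inner)
  have "0 \<le> (z - p) \<bullet> (z - p)" by simp
  also have "\<dots> = z \<bullet> z - 2 * (z \<bullet> p) + p \<bullet> p"
    by (simp add: inner_diff inner_commute)
  finally show ?thesis using zp pp by (simp add: power2_norm_eq_inner)
qed

lemma abstract:
  fixes A B :: "nat \<Rightarrow> 'a::real_inner"
  assumes oA: "\<forall>i<k. \<forall>j<k. A i \<bullet> A j = (if i = j then 1 else 0)"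
    and oB: "\<forall>i<k. \<forall>j<k. B i \<bullet> B j = (if i = j then 1 else 0)"
    and K: "\<And>y. (\<Sum>i<k. ((A i - B i) \<bullet> y)\<^sup>2) \<le> K * (norm y)\<^sup>2" and K0: "0 \<le> K"
  shows "norm (\<Sum>i<k. (A i \<bullet> x) *\<^sub>R A i - (B i \<bullet> x) *\<^sub>R B i) \<le> sqrt K * norm x"
proof -
  define P where "P = (\<lambda>z. \<Sum>i<k. (A i \<bullet> z) *\<^sub>R A i)"
  define Q where "Q = (\<lambda>z. \<Sum>i<k. (B i \<bullet> z) *\<^sub>R B i)"
  have lhs: "(\<Sum>i<k. (A i \<bullet> x) *\<^sub>R A i - (B i \<bullet> x) *\<^sub>R B i) = P x - Q x"
    by (simp add: P_def Q_def sum_subtractf)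
  define u where "u = P x"
  define w where "w = x - u"
  have Au: "A j \<bullet> u = A j \<bullet> x" if "j < k" for j
    unfolding u_def P_def by (rule on_sum[OF oA that])
  have Aw: "A j \<bullet> w = 0" if "j < k" for j
    using Au[OF that] by (simp add: w_def inner_diff_right)
  have BQ: "B j \<bullet> Q z = B j \<bullet> z" if "j < k" for j z
    unfolding Q_def by (rule on_sum[OF oB that])
  have Qlin: "Q x = Q u + Q w"
    by (simp add: Q_def w_def inner_diff_right scaleR_diff_left sum_subtractf)
  have perpQ: "v \<bullet> Q z = 0" if "\<And>j. j < k \<Longrightarrow> v \<bullet> B j = 0" for v z
    unfolding Q_def by (simp add: inner_sum_right that)
  define v where "v = u - Q u"
  have vB: "v \<bullet> B j = 0" if "j < k" for j
    using BQ[OF that, of u] by (metis inner_commute inner_diff_left diff_self v_def)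
  have orth1: "v \<bullet> Q w = 0" by (rule perpQ[OF vB])
  have eq: "(norm (P x - Q x))\<^sup>2 = (norm v)\<^sup>2 + (norm (Q w))\<^sup>2"
  proof -
    have "P x - Q x = v - Q w" using Qlin by (simp add: v_def u_def)
    then show ?thesis using orth1
      by (simp add: power2_norm_eq_inner inner_diff inner_commute)
  qed
  have nu: "(norm u)\<^sup>2 = (\<Sum>i<k. (A i \<bullet> x)\<^sup>2)"
    unfolding u_def P_def by (rule norm_sum_on[OF oA])
  have n1: "(norm v)\<^sup>2 \<le> K * (norm u)\<^sup>2"
  proof -
    have vQu: "v \<bullet> Q u = 0" by (rule perpQ[OF vB])
    have "v \<bullet> v = v \<bullet> u" using vQu by (simp add: v_def inner_diff_right)
    also have "\<dots> = (\<Sum>i<k. (A i \<bullet> x) * (v \<bullet> A i))"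
      by (simp add: u_def P_def inner_sum_right)
    also have "\<dots> = (\<Sum>i<k. (A i \<bullet> x) * ((A i - B i) \<bullet> v))"
      by (rule sum.cong) (auto simp: inner_diff_right vB inner_commute[of _ v])
    finally have vv: "v \<bullet> v = \<dots>" .
    have "(v \<bullet> v)\<^sup>2 \<le> (\<Sum>i<k. (A i \<bullet> x)\<^sup>2) * (\<Sum>i<k. ((A i - B i) \<bullet> v)\<^sup>2)"
      unfolding vv by (rule Cauchy_Schwarz_ineq_sum)
    also have "\<dots> \<le> (norm u)\<^sup>2 * (K * (norm v)\<^sup>2)"
      unfolding nu by (rule mult_left_mono[OF K]) (simp add: sum_nonneg)
    finally have "((norm v)\<^sup>2)\<^sup>2 \<le> (norm u)\<^sup>2 * (K * (norm v)\<^sup>2)"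
      by (simp add: power2_norm_eq_inner)
    then show ?thesis
      using K0 by (cases "norm v = 0") (auto simp: power2_eq_square mult_ac)
  qed
  have n2: "(norm (Q w))\<^sup>2 \<le> K * (norm w)\<^sup>2"
  proof -
    have "(norm (Q w))\<^sup>2 = (\<Sum>i<k. (B i \<bullet> w)\<^sup>2)"
      unfolding Q_def by (rule norm_sum_on[OF oB])
    also have "\<dots> = (\<Sum>i<k. ((A i - B i) \<bullet> w)\<^sup>2)"
      by (rule sum.cong) (auto simp: inner_diff_left Aw)
    also have "\<dots> \<le> K * (norm w)\<^sup>2" by (rule K)
    finally show ?thesis .
  qed
  have uw: "u \<bullet> w = 0"
    unfolding u_def P_def by (simp add: inner_sum_left Aw)
  have pyth: "(norm x)\<^sup>2 = (norm u)\<^sup>2 + (norm w)\<^sup>2"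
  proof -
    have "x = u + w" by (simp add: w_def)
    then show ?thesis using uw by (simp add: power2_norm_eq_inner inner_add inner_commute)
  qed
  have "(norm (P x - Q x))\<^sup>2 \<le> K * (norm x)\<^sup>2"
    using eq n1 n2 pyth by (simp add: algebra_simps)
  then have "norm (P x - Q x) \<le> sqrt (K * (norm x)\<^sup>2)"
    by (simp add: real_le_rsqrt)
  also have "\<dots> = sqrt K * norm x" by (simp add: real_sqrt_mult)
  finally show ?thesis using lhs by simp
qed

lemma sum_pair: "(\<Sum>pq\<in>UNIV. f pq) = (\<Sum>p\<in>UNIV. \<Sum>q\<in>UNIV. f (p, q))"
  by (simp add: sum.cartesian_product)

lemma inner_tsq: "tensor_sq a \<bullet> tensor_sq b = (a \<bullet> b)\<^sup>2"
  by (simp add: tensor_sq_def inner_vec_def sum_pair power2_eq_square sum_product mult_ac)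

lemma mv_eq:
  "quartic_diff_matrix k a b *v x =
     (\<Sum>i<k. (tensor_sq (a i) \<bullet> x) *\<^sub>R tensor_sq (a i) - (tensor_sq (b i) \<bullet> x) *\<^sub>R tensor_sq (b i))"
unfolding vec_eq_iff proof (intro allI)
  fix r
  let ?A = "\<lambda>i. tensor_sq (a i)" and ?B = "\<lambda>i. tensor_sq (b i)"
  have "(quartic_diff_matrix k a b *v x) $ r =
     (\<Sum>c\<in>UNIV. \<Sum>i<k. (?A i $ r * ?A i $ c - ?B i $ r * ?B i $ c) * x $ c)"
    by (simp add: quartic_diff_matrix_def matrix_vector_mult_def sum_distrib_right)
  also have "\<dots> = (\<Sum>i<k. \<Sum>c\<in>UNIV. (?A i $ r * ?A i $ c - ?B i $ r * ?B i $ c) * x $ c)"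
    by (rule sum.swap)
  also have "\<dots> = (\<Sum>i<k. (?A i \<bullet> x) * ?A i $ r - (?B i \<bullet> x) * ?B i $ r)"
  proof (rule sum.cong[OF refl])
    fix i
    show "(\<Sum>c\<in>UNIV. (?A i $ r * ?A i $ c - ?B i $ r * ?B i $ c) * x $ c) =
        (?A i \<bullet> x) * ?A i $ r - (?B i \<bullet> x) * ?B i $ r"
      unfolding inner_vec_def inner_real_def left_diff_distrib sum_subtractf sum_distrib_right
      by (simp add: mult_ac)
  qed
  also have "\<dots> = (\<Sum>i<k. (?A i \<bullet> x) *\<^sub>R ?A i - (?B i \<bullet> x) *\<^sub>R ?B i) $ r"
    by (simp add: sum_component)
  finally show "(quartic_diff_matrix k a b *v x) $ r = \<dots>" .
qed

definition rowv :: "real^('d\<times>'d) \<Rightarrow> real^'d \<Rightarrow> real^'d" where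
  "rowv y v = (\<chi> p. \<Sum>q\<in>UNIV. y $ (p, q) * v $ q)"
definition colv :: "real^('d\<times>'d) \<Rightarrow> real^'d \<Rightarrow> real^'d" where
  "colv y v = (\<chi> q. \<Sum>p\<in>UNIV. y $ (p, q) * v $ p)"

lemma decomp:
  fixes a c :: "real^'d"
  shows "(tensor_sq a - tensor_sq c) \<bullet> y = (a - c) \<bullet> rowv y a + (a - c) \<bullet> colv y c"
proof -
  have "(tensor_sq a - tensor_sq c) \<bullet> y = (\<Sum>p\<in>UNIV. \<Sum>q\<in>UNIV. (a$p*a$q - c$p*c$q) * y$(p,q))"
    by (simp add: tensor_sq_def inner_vec_def sum_pair)
  also have "\<dots> = (\<Sum>p\<in>UNIV. \<Sum>q\<in>UNIV. (a$p - c$p) * (y$(p,q) * a$q))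
      + (\<Sum>p\<in>UNIV. \<Sum>q\<in>UNIV. (a$q - c$q) * (y$(p,q) * c$p))"
    unfolding sum.distrib[symmetric] by (intro sum.cong refl) (simp add: algebra_simps)
  also have "(\<Sum>p\<in>UNIV. \<Sum>q\<in>UNIV. (a$p - c$p) * (y$(p,q) * a$q)) = (a - c) \<bullet> rowv y a"
    by (simp add: rowv_def inner_vec_def sum_distrib_left)
  also have "(\<Sum>p\<in>UNIV. \<Sum>q\<in>UNIV. (a$q - c$q) * (y$(p,q) * c$p))
       = (\<Sum>q\<in>UNIV. \<Sum>p\<in>UNIV. (a$q - c$q) * (y$(p,q) * c$p))"
    by (rule sum.swap)
  also have "\<dots> = (a - c) \<bullet> colv y c"
    by (simp add: colv_def inner_vec_def sum_distrib_left)
  finally show ?thesis .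
qed

lemma sum_rowv:
  fixes e :: "nat \<Rightarrow> real^'d"
  assumes orth: "\<forall>i<k. \<forall>j<k. e i \<bullet> e j = (if i = j then 1 else 0)"
  shows "(\<Sum>i<k. (norm (rowv y (e i)))\<^sup>2) \<le> (norm y)\<^sup>2"
proof -
  define r where "r p = (\<chi> q. y $ (p, q))" for p
  have each: "(norm (rowv y v))\<^sup>2 = (\<Sum>p\<in>UNIV. (v \<bullet> r p)\<^sup>2)" for v
    unfolding power2_norm_eq_inner
    by (simp add: rowv_def r_def inner_vec_def power2_eq_square mult.commute)
  have "(\<Sum>i<k. (norm (rowv y (e i)))\<^sup>2) = (\<Sum>i<k. \<Sum>p\<in>UNIV. (e i \<bullet> r p)\<^sup>2)"
    by (simp add: each)
  also have "\<dots> = (\<Sum>p\<in>UNIV. \<Sum>i<k. (e i \<bullet> r p)\<^sup>2)" by (rule sum.swap)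
  also have "\<dots> \<le> (\<Sum>p\<in>UNIV. (norm (r p))\<^sup>2)"
    by (rule sum_mono) (rule bessel[OF orth])
  also have "\<dots> = (norm y)\<^sup>2"
    by (simp add: power2_norm_eq_inner r_def inner_vec_def sum_pair)
  finally show ?thesis .
qed

lemma sum_colv:
  fixes e :: "nat \<Rightarrow> real^'d"
  assumes orth: "\<forall>i<k. \<forall>j<k. e i \<bullet> e j = (if i = j then 1 else 0)"
  shows "(\<Sum>i<k. (norm (colv y (e i)))\<^sup>2) \<le> (norm y)\<^sup>2"
proof -
  define r where "r q = (\<chi> p. y $ (p, q))" for q
  have each: "(norm (colv y v))\<^sup>2 = (\<Sum>q\<in>UNIV. (v \<bullet> r q)\<^sup>2)" for v
    unfolding power2_norm_eq_inner
    by (simp add: colv_def r_def inner_vec_def power2_eq_square mult.commute)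
  have "(\<Sum>i<k. (norm (colv y (e i)))\<^sup>2) = (\<Sum>i<k. \<Sum>q\<in>UNIV. (e i \<bullet> r q)\<^sup>2)"
    by (simp add: each)
  also have "\<dots> = (\<Sum>q\<in>UNIV. \<Sum>i<k. (e i \<bullet> r q)\<^sup>2)" by (rule sum.swap)
  also have "\<dots> \<le> (\<Sum>q\<in>UNIV. (norm (r q))\<^sup>2)"
    by (rule sum_mono) (rule bessel[OF orth])
  also have "\<dots> = (\<Sum>q\<in>UNIV. \<Sum>p\<in>UNIV. (y $ (p, q))\<^sup>2)"
    unfolding power2_norm_eq_inner by (simp add: r_def inner_vec_def power2_eq_square)
  also have "\<dots> = (\<Sum>p\<in>UNIV. \<Sum>q\<in>UNIV. (y $ (p, q))\<^sup>2)" by (rule sum.swap)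
  also have "\<dots> = (norm y)\<^sup>2"
    unfolding power2_norm_eq_inner by (simp add: inner_vec_def sum_pair power2_eq_square)
  finally show ?thesis .
qed

lemma tsq_scale: "s * s = 1 \<Longrightarrow> tensor_sq (s *\<^sub>R v) = tensor_sq v"
  by (simp add: tensor_sq_def vec_eq_iff algebra_simps)

lemma sq_sum_le: "(u + v)\<^sup>2 \<le> 2 * u\<^sup>2 + 2 * (v::real)\<^sup>2"
proof -
  have "0 \<le> (u - v)\<^sup>2" by simp
  then show ?thesis unfolding power2_diff power2_sum by linarith
qed

lemma Kbound:
  fixes a b :: "nat \<Rightarrow> real^'d" and k :: nat and \<epsilon> :: real
  assumes "0 \<le> \<epsilon>"
    and oa: "\<forall>i<k. \<forall>j<k. a i \<bullet> a j = (if i = j then 1 else 0)"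
    and ob: "\<forall>i<k. \<forall>j<k. b i \<bullet> b j = (if i = j then 1 else 0)"
    and cl: "\<forall>i<k. (a i \<bullet> b i)\<^sup>2 \<ge> 1 - \<epsilon>"
  shows "(\<Sum>i<k. ((tensor_sq (a i) - tensor_sq (b i)) \<bullet> y)\<^sup>2) \<le> (8 * \<epsilon>) * (norm y)\<^sup>2"
proof -
  define s where "s i = (if 0 \<le> a i \<bullet> b i then 1 else -1 :: real)" for i
  define c where "c i = s i *\<^sub>R b i" for i
  have ss: "s i * s i = 1" for i by (simp add: s_def)
  have tc: "tensor_sq (c i) = tensor_sq (b i)" for i
    unfolding c_def by (rule tsq_scale[OF ss])
  have oc: "\<forall>i<k. \<forall>j<k. c i \<bullet> c j = (if i = j then 1 else 0)"
    using ob ss by (auto simp: c_def)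
  have nd: "(norm (a i - c i))\<^sup>2 \<le> 2 * \<epsilon>" if i: "i < k" for i
  proof -
    let ?t = "a i \<bullet> b i"
    have aa: "a i \<bullet> a i = 1" and bb: "b i \<bullet> b i = 1" using oa ob i by auto
    have ac: "a i \<bullet> c i = \<bar>?t\<bar>" by (simp add: c_def s_def)
    have cc: "c i \<bullet> c i = 1" using oc i by auto
    have "(norm (a i - c i))\<^sup>2 = a i \<bullet> a i - 2 * (a i \<bullet> c i) + c i \<bullet> c i"
      by (simp add: power2_norm_eq_inner inner_diff inner_commute)
    also have "\<dots> = 2 - 2 * \<bar>?t\<bar>" using aa ac cc by simp
    finally have e: "(norm (a i - c i))\<^sup>2 = 2 - 2 * \<bar>?t\<bar>" .
    have "\<bar>?t\<bar> \<le> norm (a i) * norm (b i)" by (rule Cauchy_Schwarz_ineq2)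
    moreover have "norm (a i) = 1" "norm (b i) = 1" using aa bb by (simp_all add: norm_eq_1)
    ultimately have t1: "\<bar>?t\<bar> \<le> 1" by simp
    have "?t\<^sup>2 = \<bar>?t\<bar> * \<bar>?t\<bar>" by (simp add: power2_eq_square)
    also have "\<dots> \<le> \<bar>?t\<bar>" by (rule mult_left_le[OF t1 abs_ge_zero])
    finally have t2: "?t\<^sup>2 \<le> \<bar>?t\<bar>" .
    have "1 - \<epsilon> \<le> ?t\<^sup>2" using cl i by blast
    with t2 e show ?thesis by linarith
  qed
  have per: "((tensor_sq (a i) - tensor_sq (b i)) \<bullet> y)\<^sup>2 \<le>
      4 * \<epsilon> * ((norm (rowv y (a i)))\<^sup>2 + (norm (colv y (c i)))\<^sup>2)" if i: "i < k" for i
  proof -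
    let ?d = "a i - c i" and ?R = "rowv y (a i)" and ?C = "colv y (c i)"
    have "(tensor_sq (a i) - tensor_sq (b i)) \<bullet> y = ?d \<bullet> ?R + ?d \<bullet> ?C"
      using decomp[of "a i" "c i" y] by (simp add: tc)
    then have "((tensor_sq (a i) - tensor_sq (b i)) \<bullet> y)\<^sup>2 \<le> 2 * (?d \<bullet> ?R)\<^sup>2 + 2 * (?d \<bullet> ?C)\<^sup>2"
      using sq_sum_le[of "?d \<bullet> ?R" "?d \<bullet> ?C"] by simp
    also have "\<dots> \<le> 2 * ((norm ?d)\<^sup>2 * (norm ?R)\<^sup>2) + 2 * ((norm ?d)\<^sup>2 * (norm ?C)\<^sup>2)"
      using Cauchy_Schwarz_ineq[of ?d ?R] Cauchy_Schwarz_ineq[of ?d ?C]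
      by (simp add: power2_norm_eq_inner)
    also have "\<dots> \<le> 2 * ((2 * \<epsilon>) * (norm ?R)\<^sup>2) + 2 * ((2 * \<epsilon>) * (norm ?C)\<^sup>2)"
    proof -
      have "(norm ?d)\<^sup>2 * (norm ?R)\<^sup>2 \<le> (2 * \<epsilon>) * (norm ?R)\<^sup>2"
        by (rule mult_right_mono[OF nd[OF i]]) simp
      moreover have "(norm ?d)\<^sup>2 * (norm ?C)\<^sup>2 \<le> (2 * \<epsilon>) * (norm ?C)\<^sup>2"
        by (rule mult_right_mono[OF nd[OF i]]) simp
      ultimately show ?thesis by linarith
    qed
    finally show ?thesis by (simp add: algebra_simps)
  qed
  have "(\<Sum>i<k. ((tensor_sq (a i) - tensor_sq (b i)) \<bullet> y)\<^sup>2) \<le>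
      (\<Sum>i<k. 4 * \<epsilon> * ((norm (rowv y (a i)))\<^sup>2 + (norm (colv y (c i)))\<^sup>2))"
    by (rule sum_mono) (simp add: per)
  also have "\<dots> = 4 * \<epsilon> * ((\<Sum>i<k. (norm (rowv y (a i)))\<^sup>2) + (\<Sum>i<k. (norm (colv y (c i)))\<^sup>2))"
    by (simp only: sum.distrib[symmetric] sum_distrib_left)
  also have "\<dots> \<le> 4 * \<epsilon> * ((norm y)\<^sup>2 + (norm y)\<^sup>2)"
  proof (rule mult_left_mono)
    show "(\<Sum>i<k. (norm (rowv y (a i)))\<^sup>2) + (\<Sum>i<k. (norm (colv y (c i)))\<^sup>2) \<le> (norm y)\<^sup>2 + (norm y)\<^sup>2"
      using sum_rowv[OF oa, of y] sum_colv[OF oc, of y] by linarith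
    show "0 \<le> 4 * \<epsilon>" using assms(1) by simp
  qed
  finally show ?thesis by simp
qed

theorem mainTheorem10:
  fixes a b :: "nat \<Rightarrow> real^'d" and k :: nat and \<epsilon> :: real
  assumes "0 \<le> \<epsilon>"
    and "\<forall>i<k. \<forall>j<k. a i \<bullet> a j = (if i = j then 1 else 0)"
    and "\<forall>i<k. \<forall>j<k. b i \<bullet> b j = (if i = j then 1 else 0)"
    and "\<forall>i<k. (a i \<bullet> b i)\<^sup>2 \<ge> 1 - \<epsilon>"
  shows "spectral_norm (quartic_diff_matrix k a b) \<le> 4 * sqrt \<epsilon>"
proof -
  have oA: "\<forall>i<k. \<forall>j<k. tensor_sq (a i) \<bullet> tensor_sq (a j) = (if i = j then 1 else 0)"
    using assms(2) by (simp add: inner_tsq)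
  have oB: "\<forall>i<k. \<forall>j<k. tensor_sq (b i) \<bullet> tensor_sq (b j) = (if i = j then 1 else 0)"
    using assms(3) by (simp add: inner_tsq)
  have s8: "sqrt (8 * \<epsilon>) \<le> 4 * sqrt \<epsilon>"
  proof -
    have "sqrt 8 \<le> 4" by (rule real_le_lsqrt) auto
    then show ?thesis using assms(1) by (simp add: real_sqrt_mult mult_right_mono)
  qed
  have "spectral_norm (quartic_diff_matrix k a b) \<le> sqrt (8 * \<epsilon>)"
    unfolding spectral_norm_def
  proof (rule onorm_le)
    fix x :: "real^('d\<times>'d)"
    show "norm (quartic_diff_matrix k a b *v x) \<le> sqrt (8 * \<epsilon>) * norm x"
      unfolding mv_eq
      by (rule abstract[OF oA oB Kbound[OF assms]]) (use assms(1) in simp)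
  qed
  with s8 show ?thesis by linarith
qed

end
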